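(* Let $p$ be a prime, $\alpha\ge1$, $\beta\ge0$, and let $\delta\ge(\beta(p-1)+1)p^{\alpha-1}$ be an integer. Then $p^\beta$ divides $\binom{\delta}{x}_{p^\alpha}$ for every $x\in\mathbb{Z}_{p^\alpha}$.
   Context: For integers $d\ge0$, $q\ge1$ and a residue class $x\in\mathbb{Z}_q=\mathbb{Z}/q\mathbb{Z}$, $\binom{d}{x}_q:=\sum_{\hat x\in x,\ \hat x\ge0}(-1)^{\hat x}\binom{d}{\hat x}\in\mathbb{Z}$, the sum running over the nonnegative integer representatives $\hat x$ of $x$ (only $\hat x\le d$ give nonzero terms). *)

theory Defs
  imports Main "HOL-Computational_Algebra.Primes"
begin

text \<open>Alternating binomial sum over a residue class: for a class x in Z/qZ
  (represented by any integer x), sum over nonnegative representatives k of x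
  (only k \<le> d contribute) of (-1)^k * (d choose k).\<close>
definition binom_mod :: "nat \<Rightarrow> nat \<Rightarrow> int \<Rightarrow> int" where
  "binom_mod d q x = (\<Sum>k\<in>{k. k \<le> d \<and> int k mod int q = x mod int q}.
       (-1::int) ^ k * int (d choose k))"

end

theory Submission
  imports Defs "HOL-Computational_Algebra.Polynomial"
begin

lemma choose_pm1:
  fixes p k :: nat assumes "prime p" "k \<le> p - 1"
  shows "int p dvd ((-1)^k * int (p - 1 choose k) - 1)"
  using assms(2)
proof (induction k)
  case 0 then show ?case by simp
next
  case (Suc k)
  have p2: "p \<ge> 2" using assms(1) prime_ge_2_nat by blast
  have "(p - 1 choose Suc k) + (p - 1 choose k) = p choose Suc k"
  proof -
    have "Suc (p - 1) = p" using p2 by simp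
    then show ?thesis using binomial_Suc_Suc[of "p - 1" k] by simp
  qed
  moreover have "p dvd (p choose Suc k)"
    using Suc.prems p2 assms(1) by (intro dvd_choose_prime) auto
  ultimately obtain t where t: "int (p - 1 choose Suc k) = int p * t - int (p - 1 choose k)"
    by (metis add_diff_cancel_right' dvdE of_nat_add of_nat_mult)
  have IH: "int p dvd ((-1)^k * int (p - 1 choose k) - 1)" using Suc by simp
  have "(-1)^Suc k * int (p - 1 choose Suc k) - 1
      = ((-1)^k * int (p - 1 choose k) - 1) + int p * ((-1)^Suc k * t)"
    unfolding t by (simp add: algebra_simps)
  then show ?case using IH by (metis dvd_add dvd_triv_left)
qed

lemma geom_mod_p:
  fixes y :: "'a::comm_ring_1" assumes "prime p"
  shows "\<exists>E. (1 - y)^(p - 1) = (\<Sum>k<p. y^k) + of_nat p * E"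
proof -
  have p2: "p \<ge> 2" using assms(1) prime_ge_2_nat by blast
  have "\<exists>e. (-1)^k * int (p - 1 choose k) = 1 + int p * e" if kk: "k \<le> p - 1" for k
  proof -
    obtain t where "(-1)^k * int (p - 1 choose k) - 1 = int p * t"
      using choose_pm1[OF assms kk] by (elim dvdE)
    then have "(-1)^k * int (p - 1 choose k) = 1 + int p * t" by simp
    then show ?thesis by blast
  qed
  then obtain e where e: "\<And>k. k \<le> p - 1 \<Longrightarrow> (-1)^k * int (p - 1 choose k) = 1 + int p * e k"
    by metis
  have "(1 - y)^(p - 1) = ((- y) + 1)^(p - 1)" by simp
  also have "\<dots> = (\<Sum>k\<le>p - 1. of_nat (p - 1 choose k) * (- y)^k * 1^(p - 1 - k))"
    by (rule binomial_ring[of "- y" 1 "p - 1"])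
  also have "\<dots> = (\<Sum>k\<le>p - 1. of_int ((-1)^k * int (p - 1 choose k)) * y^k)"
  proof (rule sum.cong[OF refl])
    fix k
    have "(- y)^k = (-1)^k * y^k" by (rule power_minus)
    then show "of_nat (p - 1 choose k) * (- y)^k * 1^(p - 1 - k) = of_int ((-1)^k * int (p - 1 choose k)) * y^k"
      by (simp add: ac_simps)
  qed
  also have "\<dots> = (\<Sum>k\<le>p - 1. y^k + of_nat p * (of_int (e k) * y^k))"
  proof (rule sum.cong[OF refl])
    fix k assume "k \<in> {..p - 1}"
    then have "(-1)^k * int (p - 1 choose k) = 1 + int p * e k" using e by simp
    then show "of_int ((-1)^k * int (p - 1 choose k)) * y^k = y^k + of_nat p * (of_int (e k) * y^k)"
      by (simp add: distrib_right mult.assoc)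
  qed
  also have "\<dots> = (\<Sum>k\<le>p - 1. y^k) + of_nat p * (\<Sum>k\<le>p - 1. of_int (e k) * y^k)"
    by (simp only: sum.distrib sum_distrib_left)
  also have "{..p - 1} = {..<p}" using p2 by auto
  finally show ?thesis by blast
qed

lemma frob1:
  fixes y :: "'a::comm_ring_1" assumes "prime p"
  shows "\<exists>E. (1 - y)^p = 1 - y^p + of_nat p * ((1 - y) * E)"
proof -
  have p2: "p \<ge> 2" using assms(1) prime_ge_2_nat by blast
  obtain E where E: "(1 - y)^(p - 1) = (\<Sum>k<p. y^k) + of_nat p * E"
    using geom_mod_p[OF assms] by blast
  have "(1 - y)^p = (1 - y) * (1 - y)^(p - 1)" using p2
  proof -
    have "Suc (p - 1) = p" using p2 by simp
    then show ?thesis using power_Suc[of "1 - y" "p - 1"] by simp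
  qed
  also have "\<dots> = (1 - y) * (\<Sum>k<p. y^k) + of_nat p * ((1 - y) * E)"
    by (subst E) (simp add: algebra_simps)
  also have "(1 - y) * (\<Sum>k<p. y^k) = 1 - y^p" by (simp add: one_diff_power_eq)
  finally show ?thesis by blast
qed

lemma dvd_pow_diff:
  fixes a b :: "'a::comm_ring_1"
  shows "(a - b) dvd (a^n - b^n)"
  by (metis dvd_triv_left power_diff_sumr2)

lemma frob:
  fixes x :: "'a::comm_ring_1" assumes "prime p"
  shows "\<exists>A. (1 - x)^(p^k) = 1 - x^(p^k) + of_nat p * A"
proof (induction k)
  case 0 then show ?case by (auto intro: exI[of _ 0])
next
  case (Suc k)
  then obtain A where A: "(1 - x)^(p^k) = 1 - x^(p^k) + of_nat p * A" by blast
  obtain E where E: "(1 - x^(p^k))^p = 1 - (x^(p^k))^p + of_nat p * ((1 - x^(p^k)) * E)"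
    using frob1[OF assms] by blast
  have "(of_nat p * A) dvd ((1 - x^(p^k) + of_nat p * A)^p - (1 - x^(p^k))^p)"
    using dvd_pow_diff[of "1 - x^(p^k) + of_nat p * A" "1 - x^(p^k)" p] by simp
  then obtain D where D: "(1 - x^(p^k) + of_nat p * A)^p = (1 - x^(p^k))^p + of_nat p * A * D"
    by (metis add.commute diff_add_cancel dvdE)
  have xp: "(x^(p^k))^p = x^(p^Suc k)" by (simp only: power_Suc2 power_mult)
  have "(1 - x)^(p^Suc k) = ((1 - x)^(p^k))^p"
    by (simp only: power_Suc2 power_mult)
  also have "\<dots> = 1 - x^(p^Suc k) + of_nat p * ((1 - x^(p^k)) * E + A * D)"
    unfolding A D E xp by (simp add: algebra_simps)
  finally show ?case by blast
qed

definition inI :: "'a::comm_ring_1 \<Rightarrow> 'a \<Rightarrow> nat \<Rightarrow> 'a \<Rightarrow> bool" where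
  "inI M c b P \<longleftrightarrow> (\<exists>A B. P = c^b * A + M * B)"

lemma inI_add: "inI M c b P \<Longrightarrow> inI M c b Q \<Longrightarrow> inI M c b (P + Q)"
proof -
  assume "inI M c b P" "inI M c b Q"
  then obtain A B A' B' where "P = c^b * A + M * B" "Q = c^b * A' + M * B'"
    unfolding inI_def by blast
  then have "P + Q = c^b * (A + A') + M * (B + B')"
    by (simp add: algebra_simps)
  then show ?thesis unfolding inI_def by blast
qed

lemma inI_zero: "inI M c b 0"
  unfolding inI_def by (rule exI[of _ 0], rule exI[of _ 0]) simp

lemma inI_sum: "(\<And>i. i \<in> S \<Longrightarrow> inI M c b (f i)) \<Longrightarrow> inI M c b (\<Sum>i\<in>S. f i)"
  by (induction S rule: infinite_finite_induct) (auto intro: inI_add inI_zero)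

lemma inI_mult: "inI M c a P \<Longrightarrow> inI M c b Q \<Longrightarrow> inI M c (a + b) (P * Q)"
proof -
  assume "inI M c a P" "inI M c b Q"
  then obtain A B A' B' where "P = c^a * A + M * B" "Q = c^b * A' + M * B'"
    unfolding inI_def by blast
  then have "P * Q = c^(a+b) * (A * A') + M * (B * Q + c^a * A * B')"
    by (simp add: algebra_simps power_add)
  then show ?thesis unfolding inI_def by blast
qed

lemma inI_mono: "b' \<le> b \<Longrightarrow> inI M c b P \<Longrightarrow> inI M c b' P"
proof -
  assume "b' \<le> b" "inI M c b P"
  then obtain A B where "P = c^b * A + M * B" unfolding inI_def by blast
  moreover have "c^b = c^b' * c^(b - b')" using \<open>b' \<le> b\<close>
    by (metis le_add_diff_inverse power_add)
  ultimately have "P = c^b' * (c^(b - b') * A) + M * B" by (simp add: mult.assoc)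
  then show ?thesis unfolding inI_def by blast
qed

lemma inI_any: "inI M c 0 P"
  unfolding inI_def by (rule exI[of _ P], rule exI[of _ 0]) simp

lemma inI_cpow: "inI M c b (c^b * A)"
  unfolding inI_def by (rule exI[of _ A], rule exI[of _ 0]) simp

lemma arith_key:
  fixes P a b :: nat assumes "P \<ge> 1" "a \<le> b * P"
  shows "a div P + (b * P - a) \<ge> b"
proof -
  define s where "s = a div P"
  define r where "r = a mod P"
  have a: "a = s * P + r" unfolding s_def r_def by simp
  have rP: "r < P" unfolding r_def using assms(1) by simp
  have sb: "s \<le> b"
  proof (rule ccontr)
    assume "\<not> s \<le> b"
    then have "s * P \<ge> (b + 1) * P" using assms(1) by (intro mult_right_mono) auto
    then show False using assms(2) a assms(1) by (simp add: algebra_simps)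
  qed
  then obtain d where d: "b = s + d" using le_Suc_ex by blast
  have "d * P \<ge> d + r"
  proof (cases d)
    case 0 then show ?thesis using assms(2) a d by simp
  next
    case (Suc d')
    have "d' * P \<ge> d'" using assms(1) by simp
    moreover have "d * P = P + d' * P" using Suc by simp
    ultimately show ?thesis using Suc rP by linarith
  qed
  then have dd: "d * P - r \<ge> d" by (simp add: le_diff_conv2)
  have "b * P = s * P + d * P" using d by (simp add: distrib_right)
  then have "b * P - a = d * P - r" using a by simp
  then have "b * P - a \<ge> d" using dd by simp
  moreover have "a div P = s" by (simp add: s_def)
  ultimately show ?thesis using d by linarith
qed


lemma inI_mult_left: "inI M c b Q \<Longrightarrow> inI M c b (P * Q)"
  using inI_mult[OF inI_any[of M c P]] by simp

lemma inI_mult_right: "inI M c b Q \<Longrightarrow> inI M c b (Q * P)"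
  using inI_mult_left[of M c b Q P] by (simp add: mult.commute)

lemma hstep:
  fixes h M :: "'a::comm_ring_1"
  assumes "prime p" "h^p = 1 + M"
  shows "\<exists>Z B. (1 - h)^(1 + t * (p - 1)) = of_nat p ^ t * (1 - h) * Z + M * B"
proof (induction t)
  case 0
  show ?case by (rule exI[of _ 1], rule exI[of _ 0]) simp
next
  case (Suc t)
  define c :: 'a where "c = of_nat p"
  obtain Z B where ZB: "(1 - h)^(1 + t * (p - 1)) = c ^ t * (1 - h) * Z + M * B"
    using Suc c_def by blast
  obtain E where E: "(1 - h)^(p - 1) = (\<Sum>k<p. h^k) + c * E"
    using geom_mod_p[OF assms(1), of h] c_def by blast
  have G: "(1 - h) * (\<Sum>k<p. h^k) = - M"
    using assms(2) by (simp add: one_diff_power_eq[symmetric])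
  have "(1 - h)^(1 + Suc t * (p - 1)) = (1 - h)^(1 + t * (p - 1)) * (1 - h)^(p - 1)"
  proof -
    have "1 + Suc t * (p - 1) = (1 + t * (p - 1)) + (p - 1)" by simp
    then show ?thesis by (simp only: power_add)
  qed
  also have "\<dots> = (c ^ t * (1 - h) * Z) * ((\<Sum>k<p. h^k) + c * E) + M * (B * (1 - h)^(p - 1))"
  proof -
    have e1: "(c ^ t * (1 - h) * Z) * (1 - h)^(p - 1) = (c ^ t * (1 - h) * Z) * ((\<Sum>k<p. h^k) + c * E)"
      by (simp only: E)
    show ?thesis unfolding ZB e1[symmetric] by (simp add: algebra_simps)
  qed
  also have "(c ^ t * (1 - h) * Z) * ((\<Sum>k<p. h^k) + c * E)
      = c^t * Z * ((1 - h) * (\<Sum>k<p. h^k)) + c ^ Suc t * (1 - h) * (Z * E)"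
    by (simp add: algebra_simps)
  also have "\<dots> = c ^ Suc t * (1 - h) * (Z * E) + M * (- (c^t * Z))"
    unfolding G by (simp add: algebra_simps)
  finally have "(1 - h)^(1 + Suc t * (p - 1)) = c ^ Suc t * (1 - h) * (Z * E) + M * (B * (1 - h)^(p - 1) - c^t * Z)"
    by (simp add: algebra_simps)
  then show ?case unfolding c_def by blast
qed

lemma hpow:
  fixes h M :: "'a::comm_ring_1"
  assumes "prime p" "h^p = 1 + M" "j \<ge> 1"
  shows "inI M (of_nat p) ((j - 1) div (p - 1)) ((1 - h)^j)"
proof -
  define s where "s = (j - 1) div (p - 1)"
  define r where "r = (j - 1) mod (p - 1)"
  have j: "j = (1 + s * (p - 1)) + r" unfolding s_def r_def using assms(3) div_mult_mod_eq[of "j - 1" "p - 1"] by linarith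
  obtain Z B where ZB: "(1 - h)^(1 + s * (p - 1)) = of_nat p ^ s * (1 - h) * Z + M * B"
    using hstep[OF assms(1,2)] by blast
  have "inI M (of_nat p) s ((1 - h)^(1 + s * (p - 1)))"
    unfolding ZB inI_def by (rule exI[of _ "(1 - h) * Z"], rule exI[of _ B]) (simp add: mult.assoc)
  then have "inI M (of_nat p) (s + 0) ((1 - h)^(1 + s * (p - 1)) * (1 - h)^r)"
    by (rule inI_mult) (rule inI_any)
  then show ?thesis unfolding s_def[symmetric] by (subst j) (simp add: power_add mult.assoc)
qed

lemma main_generic:
  fixes x M :: "'a::comm_ring_1"
  assumes p: "prime p" and a: "\<alpha> \<ge> 1" and xM: "x^(p^\<alpha>) = 1 + M"
    and d: "\<delta> \<ge> (\<beta> * (p - 1) + 1) * p ^ (\<alpha> - 1)"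
  shows "inI M (of_nat p) \<beta> ((1 - x)^\<delta>)"
proof -
  define c :: 'a where "c = of_nat p"
  define m where "m = p ^ (\<alpha> - 1)"
  define h where "h = x ^ m"
  define n where "n = \<beta> * (p - 1) + 1"
  have p2: "p \<ge> 2" using p prime_ge_2_nat by blast
  have "m * p = p ^ \<alpha>" unfolding m_def using a
    by (metis Suc_diff_1 less_le_trans mult.commute power_Suc zero_less_one)
  then have hp: "h^p = 1 + M" unfolding h_def using xM by (simp add: power_mult[symmetric])
  obtain A where A: "(1 - x)^m = (1 - h) + c * A"
    using frob[OF p, of x "\<alpha> - 1"] unfolding m_def h_def c_def by (auto simp: algebra_simps)
  have "(1 - x)^(m * n) = ((1 - h) + c * A)^n" by (simp add: power_mult A)
  also have "\<dots> = (\<Sum>j\<le>n. of_nat (n choose j) * (1 - h)^j * (c * A)^(n - j))"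
    by (rule binomial_ring[of "1 - h" "c * A" n])
  finally have expand: "(1 - x)^(m * n) = (\<Sum>j\<le>n. of_nat (n choose j) * (1 - h)^j * (c * A)^(n - j))" .
  have "inI M c \<beta> ((1 - x)^(m * n))"
    unfolding expand
  proof (rule inI_sum)
    fix j assume "j \<in> {..n}"
    then have jn: "j \<le> n" by simp
    have cA: "inI M c (n - j) ((c * A)^(n - j))"
      by (simp add: power_mult_distrib inI_cpow)
    show "inI M c \<beta> (of_nat (n choose j) * (1 - h)^j * (c * A)^(n - j))"
    proof (cases "j = 0")
      case True
      have "\<beta> \<le> n"
      proof -
        have "\<beta> * 1 \<le> \<beta> * (p - 1)" using p2 by (intro mult_le_mono2) simp
        then show ?thesis using n_def by linarith
      qed
      then have "inI M c \<beta> ((c * A)^(n - j))" using cA True by (intro inI_mono[of \<beta> n]) auto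
      then show ?thesis by (simp add: mult.assoc inI_mult_left)
    next
      case False
      have hj: "inI M c ((j - 1) div (p - 1)) ((1 - h)^j)"
        unfolding c_def using hpow[OF p hp] False by simp
      have key: "(j - 1) div (p - 1) + (\<beta> * (p - 1) - (j - 1)) \<ge> \<beta>"
        using arith_key[of "p - 1" "j - 1" \<beta>] p2 jn n_def by simp
      have "n - j = \<beta> * (p - 1) - (j - 1)" unfolding n_def using False by simp
      then have "inI M c ((j - 1) div (p - 1) + (n - j)) ((1 - h)^j * (c * A)^(n - j))"
        using inI_mult[OF hj cA] by simp
      then have "inI M c \<beta> ((1 - h)^j * (c * A)^(n - j))"
        using key \<open>n - j = _\<close> by (intro inI_mono[of \<beta>]) auto
      then show ?thesis by (simp add: mult.assoc inI_mult_left)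
    qed
  qed
  moreover have "m * n \<le> \<delta>" using d unfolding m_def n_def by (simp add: mult.commute)
  then have "(1 - x)^\<delta> = (1 - x)^(m * n) * (1 - x)^(\<delta> - m * n)"
    by (simp add: power_add[symmetric])
  ultimately show ?thesis unfolding c_def by (simp add: inI_mult_right)
qed
lemma shift_sum:
  fixes h :: "nat \<Rightarrow> 'a::comm_monoid_add"
  shows "(\<Sum>k<q + L. (if k < q then 0 else h (k - q))) = (\<Sum>k<L. h k)"
  by (induction L) auto

definition FF :: "nat \<Rightarrow> nat \<Rightarrow> int \<Rightarrow> int poly \<Rightarrow> int" where
  "FF N q r P = (\<Sum>k<N. (if int k mod int q = r mod int q then coeff P k else 0))"

lemma FF_add: "FF N q r (P + Q) = FF N q r P + FF N q r Q"
  unfolding FF_def sum.distrib[symmetric] by (intro sum.cong refl) simp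

lemma FF_cmult: "(c::int) dvd FF N q r ([:c:] * A)"
  unfolding FF_def by (intro dvd_sum) auto

lemma FF_M:
  assumes "degree B < L"
  shows "FF (q + L) q r (monom 1 q * B - B) = 0"
proof -
  define w where "w k = (int k mod int q = r mod int q)" for k
  have "FF (q + L) q r (monom 1 q * B) = (\<Sum>k<q + L. (if k < q then 0 else (if w ((k - q) + q) then coeff B (k - q) else 0)))"
    unfolding FF_def w_def by (intro sum.cong refl) (auto simp: coeff_monom_mult)
  also have "\<dots> = (\<Sum>k<L. (if w (k + q) then coeff B k else 0))"
    by (rule shift_sum)
  also have "\<dots> = (\<Sum>k<L. (if w k then coeff B k else 0))"
    unfolding w_def by (intro sum.cong refl) (simp add: mod_add_right_eq[symmetric] add.commute)
  also have "\<dots> = FF (q + L) q r B"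
    unfolding FF_def w_def
    by (rule sum.mono_neutral_left) (use assms in \<open>auto intro!: coeff_eq_0\<close>)
  finally have "FF (q + L) q r (monom 1 q * B) = FF (q + L) q r B" .
  moreover have "FF (q + L) q r (monom 1 q * B) = FF (q + L) q r (monom 1 q * B - B) + FF (q + L) q r B"
    using FF_add[of "q + L" q r "monom 1 q * B - B" B] by simp
  ultimately show ?thesis by simp
qed

lemma coeff_1mx:
  "coeff ((1 - monom (1::int) 1) ^ d) k = (if k \<le> d then (-1)^k * int (d choose k) else 0)"
proof -
  have "(1 - monom (1::int) 1) ^ d = ((- monom 1 1) + 1) ^ d" by simp
  also have "\<dots> = (\<Sum>j\<le>d. of_nat (d choose j) * (- monom 1 1) ^ j * 1 ^ (d - j))"
    by (rule binomial_ring[of "- monom 1 1" 1 d])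
  also have "\<dots> = (\<Sum>j\<le>d. monom ((-1)^j * int (d choose j)) j)"
  proof (rule sum.cong[OF refl])
    fix j
    have "(- monom (1::int) 1) ^ j = monom ((-1)^j) j"
      by (simp only: minus_monom monom_power mult_1)
    then show "of_nat (d choose j) * (- monom (1::int) 1) ^ j * 1 ^ (d - j) = monom ((-1)^j * int (d choose j)) j"
      by (simp add: of_nat_poly smult_monom mult_ac)
  qed
  finally show ?thesis by (simp add: coeff_sum coeff_monom)
qed

lemma FF_binom:
  assumes "d < N"
  shows "FF N q r ((1 - monom 1 1) ^ d) = binom_mod d q r"
proof -
  define S where "S = {k. k \<le> d \<and> int k mod int q = r mod int q}"
  have "FF N q r ((1 - monom 1 1) ^ d) = (\<Sum>k<N. (if k \<in> S then (-1::int)^k * int (d choose k) else 0))"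
    unfolding FF_def S_def coeff_1mx by (intro sum.cong refl) auto
  also have "\<dots> = (\<Sum>k\<in>{..<N} \<inter> S. (-1::int)^k * int (d choose k))"
    by (rule sum.inter_restrict[symmetric]) simp
  also have "{..<N} \<inter> S = S" unfolding S_def using assms by auto
  finally show ?thesis unfolding binom_mod_def S_def .
qed

theorem corollary3p5:
  fixes p \<alpha> \<beta> \<delta> :: nat and x :: int
  assumes "prime p" and "\<alpha> \<ge> 1"
    and "\<delta> \<ge> (\<beta> * (p - 1) + 1) * p ^ (\<alpha> - 1)"
  shows "(int p) ^ \<beta> dvd binom_mod \<delta> (p ^ \<alpha>) x"
proof -
  define q where "q = p ^ \<alpha>"
  define X :: "int poly" where "X = monom 1 1"
  define M :: "int poly" where "M = monom 1 q - 1"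
  have Xq: "X ^ q = monom 1 q" unfolding X_def by (simp add: monom_power)
  have xM: "X ^ (p ^ \<alpha>) = 1 + M" unfolding M_def q_def[symmetric] Xq by simp
  obtain A B where AB: "(1 - X) ^ \<delta> = of_nat p ^ \<beta> * A + M * B"
    using main_generic[OF assms(1,2) xM assms(3)] unfolding inI_def by blast
  have cp: "(of_nat p ^ \<beta> :: int poly) = [:int p ^ \<beta>:]"
  proof -
    have "(of_nat p ^ \<beta> :: int poly) = of_nat (p ^ \<beta>)" by simp
    also have "\<dots> = [:int p ^ \<beta>:]" by (simp add: of_nat_poly)
    finally show ?thesis .
  qed
  have MB: "M * B = monom 1 q * B - B" unfolding M_def by (simp add: algebra_simps)
  define L where "L = degree B + \<delta> + 1"
  have "FF (q + L) q x ((1 - X) ^ \<delta>) = binom_mod \<delta> q x"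
    unfolding X_def by (rule FF_binom) (simp add: L_def)
  moreover have "FF (q + L) q x ((1 - X) ^ \<delta>)
      = FF (q + L) q x ([:int p ^ \<beta>:] * A) + FF (q + L) q x (monom 1 q * B - B)"
    unfolding AB cp MB by (rule FF_add)
  moreover have "FF (q + L) q x (monom 1 q * B - B) = 0"
    by (rule FF_M) (simp add: L_def)
  moreover have "int p ^ \<beta> dvd FF (q + L) q x ([:int p ^ \<beta>:] * A)"
    by (rule FF_cmult)
  ultimately show ?thesis unfolding q_def by simp
qed

end
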